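(* Let $Q$ be a groupoid quantale with base locale $A$, let $X$ be a stably supported $Q$-module with support $\varsigma_X$ and inner product $\langle-,-\rangle$, and let $x\in X$ and $b\in A$ satisfy $b\triangleright1_X\le\langle x,x\rangle\cdot1_X$ and $b\triangleright x=x$. Then $b=\varsigma_X(x)$.
   Context: Let $A$ be a locale. An involutive $A$-$A$-quantale $Q$ is a sup-lattice with commuting unital left and right $A$-actions $a\triangleright q$, $q\triangleleft a$, an associative join-preserving multiplication with $(a\triangleright x)y=a\triangleright(xy)$, $(x\triangleleft a)y=x(a\triangleright y)$, $(xy)\triangleleft a=x(y\triangleleft a)$, and a join-preserving involution with $x^{**}=x$, $(xy)^*=y^*x^*$, $(a\triangleright x\triangleleft b)^*=b\triangleright x^*\triangleleft a$. A support is a sup-lattice homomorphism $\varsigma_Q:Q\to A$ with $\varsigma_Q(1_Q)=1_A$, $\varsigma_Q(x)\triangleright y\le xx^*y$, $\varsigma_Q(x)\triangleright x=x$; equivariant if $\varsigma_Q(a\triangleright x)=a\wedge\varsigma_Q(x)$. A groupoid quantale is such a $Q$ which is a frame with $(a\triangleright q)\wedge m=a\triangleright(q\wedge m)$, $m\wedge(q\triangleleft a)=(q\wedge m)\triangleleft a$, equipped with an equivariant support and a frame homomorphism $\upsilon:Q\to A$ with $\upsilon(a\triangleright1_Q)=a=\upsilon(1_Q\triangleleft a)$, such that the right adjoint of $Q\otimes_AQ\to Q$ preserves joins, $\bigvee_{xy\le a}\upsilon(x)\triangleright y=a$, and $\upsilon(a)\triangleright1_Q=\bigvee_{xx^*\le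 a}x$. A $Q$-module is a locale $X$ with a left $Q$-action $q\cdot x$ and unital left $A$-module structure $a\triangleright x$ satisfying $(a\triangleright q)\cdot x=a\triangleright(q\cdot x)$, $(q\triangleleft a)\cdot x=q\cdot(a\triangleright x)$, $a\triangleright(x\wedge y)=(a\triangleright x)\wedge y$. A pre-Hilbert $Q$-module has $\langle-,-\rangle:X\times X\to Q$ with $\langle q\cdot x,y\rangle=q\langle x,y\rangle$, $a\triangleright\langle x,1_X\rangle=\langle a\triangleright x,1_X\rangle$, $\langle\bigvee x_\alpha,y\rangle=\bigvee\langle x_\alpha,y\rangle$, $\langle x,y\rangle=\langle y,x\rangle^*$. A support is a monotone $\varsigma_X:X\to A$ with $\varsigma_X(1_X)=1_A$, $\varsigma_X(x)\triangleright1_X\le\langle x,x\rangle\cdot1_X$, $\varsigma_X(x)\triangleright x=x$; stable if $\varsigma_X(q\cdot x)\le\varsigma_Q(q)$ for all $q,x$. *)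

theory Defs
  imports Main
begin

text \<open>Sup-lattices are modelled by types of class complete_lattice.
  A locale (frame) is a complete lattice in which binary meets distribute
  over arbitrary joins.\<close>

definition is_frame :: "'a::complete_lattice itself \<Rightarrow> bool" where
  "is_frame _ \<longleftrightarrow> (\<forall>(a::'a) S. inf a (Sup S) = Sup ((\<lambda>s. inf a s) ` S))"

text \<open>Unital left module over a locale A (A viewed as a unital quantale with
  multiplication = meet): the action preserves joins in each variable,
  is associative and unital.\<close>

definition left_loc_module :: "('a::complete_lattice \<Rightarrow> 'm::complete_lattice \<Rightarrow> 'm) \<Rightarrow> bool" where
  "left_loc_module act \<longleftrightarrow>
     (\<forall>a S. act a (Sup S) = Sup (act a ` S)) \<and>
     (\<forall>S m. act (Sup S) m = Sup ((\<lambda>a. act a m) ` S)) \<and>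
     (\<forall>a b m. act (inf a b) m = act a (act b m)) \<and>
     (\<forall>m. act top m = m)"

definition right_loc_module :: "('m::complete_lattice \<Rightarrow> 'a::complete_lattice \<Rightarrow> 'm) \<Rightarrow> bool" where
  "right_loc_module act \<longleftrightarrow>
     (\<forall>a S. act (Sup S) a = Sup ((\<lambda>m. act m a) ` S)) \<and>
     (\<forall>S m. act m (Sup S) = Sup (act m ` S)) \<and>
     (\<forall>a b m. act m (inf a b) = act (act m a) b) \<and>
     (\<forall>m. act m top = m)"

definition inv_AA_quantale ::
  "('a::complete_lattice \<Rightarrow> 'q::complete_lattice \<Rightarrow> 'q) \<Rightarrow> ('q \<Rightarrow> 'a \<Rightarrow> 'q)
   \<Rightarrow> ('q \<Rightarrow> 'q \<Rightarrow> 'q) \<Rightarrow> ('q \<Rightarrow> 'q) \<Rightarrow> bool" where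
  "inv_AA_quantale la ra mult invl \<longleftrightarrow>
     left_loc_module la \<and> right_loc_module ra \<and>
     (\<forall>a b q. ra (la a q) b = la a (ra q b)) \<and>
     (\<forall>x y z. mult (mult x y) z = mult x (mult y z)) \<and>
     (\<forall>S y. mult (Sup S) y = Sup ((\<lambda>x. mult x y) ` S)) \<and>
     (\<forall>x S. mult x (Sup S) = Sup (mult x ` S)) \<and>
     (\<forall>a x y. mult (la a x) y = la a (mult x y)) \<and>
     (\<forall>a x y. mult (ra x a) y = mult x (la a y)) \<and>
     (\<forall>a x y. ra (mult x y) a = mult x (ra y a)) \<and>
     (\<forall>S. invl (Sup S) = Sup (invl ` S)) \<and>
     (\<forall>x. invl (invl x) = x) \<and>
     (\<forall>x y. invl (mult x y) = mult (invl y) (invl x)) \<and>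
     (\<forall>a b x. invl (ra (la a x) b) = ra (la b (invl x)) a)"

definition quantale_support ::
  "('a::complete_lattice \<Rightarrow> 'q::complete_lattice \<Rightarrow> 'q) \<Rightarrow> ('q \<Rightarrow> 'q \<Rightarrow> 'q) \<Rightarrow> ('q \<Rightarrow> 'q)
   \<Rightarrow> ('q \<Rightarrow> 'a) \<Rightarrow> bool" where
  "quantale_support la mult invl supp \<longleftrightarrow>
     (\<forall>S. supp (Sup S) = Sup (supp ` S)) \<and>
     supp top = top \<and>
     (\<forall>x y. la (supp x) y \<le> mult (mult x (invl x)) y) \<and>
     (\<forall>x. la (supp x) x = x)"

definition equivariant_support ::
  "('a::complete_lattice \<Rightarrow> 'q::complete_lattice \<Rightarrow> 'q) \<Rightarrow> ('q \<Rightarrow> 'a) \<Rightarrow> bool" where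
  "equivariant_support la supp \<longleftrightarrow> (\<forall>a x. supp (la a x) = inf a (supp x))"

definition frame_hom :: "('q::complete_lattice \<Rightarrow> 'a::complete_lattice) \<Rightarrow> bool" where
  "frame_hom f \<longleftrightarrow> (\<forall>S. f (Sup S) = Sup (f ` S)) \<and> (\<forall>x y. f (inf x y) = inf (f x) (f y))
                    \<and> f top = top"

text \<open>The tensor product Q \<otimes>_A Q of the right A-module Q with the left A-module Q,
  presented (Joyal--Tierney) as the sup-lattice of subsets T of Q \<times> Q that are
  down-closed, closed under joins in each coordinate, and A-balanced
  (the pair (x,y) in T represents the generator x \<otimes> y being below T).\<close>

definition tensor_elem ::
  "('a::complete_lattice \<Rightarrow> 'q::complete_lattice \<Rightarrow> 'q) \<Rightarrow> ('q \<Rightarrow> 'a \<Rightarrow> 'q) \<Rightarrow> ('q \<times> 'q) set \<Rightarrow> bool" where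
  "tensor_elem la ra T \<longleftrightarrow>
     (\<forall>x y x' y'. (x', y') \<in> T \<longrightarrow> x \<le> x' \<longrightarrow> y \<le> y' \<longrightarrow> (x, y) \<in> T) \<and>
     (\<forall>S y. (\<forall>s\<in>S. (s, y) \<in> T) \<longrightarrow> (Sup S, y) \<in> T) \<and>
     (\<forall>x S. (\<forall>s\<in>S. (x, s) \<in> T) \<longrightarrow> (x, Sup S) \<in> T) \<and>
     (\<forall>x a y. (ra x a, y) \<in> T \<longleftrightarrow> (x, la a y) \<in> T)"

definition tensor_join ::
  "('a::complete_lattice \<Rightarrow> 'q::complete_lattice \<Rightarrow> 'q) \<Rightarrow> ('q \<Rightarrow> 'a \<Rightarrow> 'q) \<Rightarrow> ('q \<times> 'q) set set
   \<Rightarrow> ('q \<times> 'q) set" where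
  "tensor_join la ra F = \<Inter> {T. tensor_elem la ra T \<and> \<Union> F \<subseteq> T}"

text \<open>Right adjoint of the multiplication map Q \<otimes>_A Q \<rightarrow> Q, x \<otimes> y \<mapsto> xy.\<close>
definition mult_radj :: "('q::complete_lattice \<Rightarrow> 'q \<Rightarrow> 'q) \<Rightarrow> 'q \<Rightarrow> ('q \<times> 'q) set" where
  "mult_radj mult q = {(x, y). mult x y \<le> q}"

definition groupoid_quantale ::
  "('a::complete_lattice \<Rightarrow> 'q::complete_lattice \<Rightarrow> 'q) \<Rightarrow> ('q \<Rightarrow> 'a \<Rightarrow> 'q)
   \<Rightarrow> ('q \<Rightarrow> 'q \<Rightarrow> 'q) \<Rightarrow> ('q \<Rightarrow> 'q) \<Rightarrow> ('q \<Rightarrow> 'a) \<Rightarrow> ('q \<Rightarrow> 'a) \<Rightarrow> bool" where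
  "groupoid_quantale la ra mult invl supp ups \<longleftrightarrow>
     inv_AA_quantale la ra mult invl \<and>
     is_frame TYPE('q) \<and>
     (\<forall>a q m. inf (la a q) m = la a (inf q m)) \<and>
     (\<forall>a q m. inf m (ra q a) = ra (inf q m) a) \<and>
     quantale_support la mult invl supp \<and> equivariant_support la supp \<and>
     frame_hom ups \<and>
     (\<forall>a. ups (la a top) = a \<and> ups (ra top a) = a) \<and>
     (\<forall>K. mult_radj mult (Sup K) = tensor_join la ra (mult_radj mult ` K)) \<and>
     (\<forall>q. Sup {la (ups x) y | x y. mult x y \<le> q} = q) \<and>
     (\<forall>q. la (ups q) top = Sup {x. mult x (invl x) \<le> q})"

definition Q_module ::
  "('a::complete_lattice \<Rightarrow> 'q::complete_lattice \<Rightarrow> 'q) \<Rightarrow> ('q \<Rightarrow> 'a \<Rightarrow> 'q) \<Rightarrow> ('q \<Rightarrow> 'q \<Rightarrow> 'q)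
   \<Rightarrow> ('q \<Rightarrow> 'x::complete_lattice \<Rightarrow> 'x) \<Rightarrow> ('a \<Rightarrow> 'x \<Rightarrow> 'x) \<Rightarrow> bool" where
  "Q_module la ra mult qa xa \<longleftrightarrow>
     is_frame TYPE('x) \<and>
     (\<forall>S x. qa (Sup S) x = Sup ((\<lambda>q. qa q x) ` S)) \<and>
     (\<forall>q S. qa q (Sup S) = Sup (qa q ` S)) \<and>
     (\<forall>q r x. qa (mult q r) x = qa q (qa r x)) \<and>
     left_loc_module xa \<and>
     (\<forall>a q x. qa (la a q) x = xa a (qa q x)) \<and>
     (\<forall>a q x. qa (ra q a) x = qa q (xa a x)) \<and>
     (\<forall>a x y. xa a (inf x y) = inf (xa a x) y)"

definition pre_hilbert ::
  "('a::complete_lattice \<Rightarrow> 'q::complete_lattice \<Rightarrow> 'q) \<Rightarrow> ('q \<Rightarrow> 'q \<Rightarrow> 'q) \<Rightarrow> ('q \<Rightarrow> 'q)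
   \<Rightarrow> ('q \<Rightarrow> 'x::complete_lattice \<Rightarrow> 'x) \<Rightarrow> ('a \<Rightarrow> 'x \<Rightarrow> 'x) \<Rightarrow> ('x \<Rightarrow> 'x \<Rightarrow> 'q) \<Rightarrow> bool" where
  "pre_hilbert la mult invl qa xa ip \<longleftrightarrow>
     (\<forall>q x y. ip (qa q x) y = mult q (ip x y)) \<and>
     (\<forall>a x. la a (ip x top) = ip (xa a x) top) \<and>
     (\<forall>S y. ip (Sup S) y = Sup ((\<lambda>x. ip x y) ` S)) \<and>
     (\<forall>x y. ip x y = invl (ip y x))"

definition module_support ::
  "('q::complete_lattice \<Rightarrow> 'x::complete_lattice \<Rightarrow> 'x) \<Rightarrow> ('a::complete_lattice \<Rightarrow> 'x \<Rightarrow> 'x)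
   \<Rightarrow> ('x \<Rightarrow> 'x \<Rightarrow> 'q) \<Rightarrow> ('x \<Rightarrow> 'a) \<Rightarrow> bool" where
  "module_support qa xa ip suppX \<longleftrightarrow>
     mono suppX \<and> suppX top = top \<and>
     (\<forall>x. xa (suppX x) top \<le> qa (ip x x) top) \<and>
     (\<forall>x. xa (suppX x) x = x)"

definition stable_support ::
  "('q::complete_lattice \<Rightarrow> 'x::complete_lattice \<Rightarrow> 'x) \<Rightarrow> ('q \<Rightarrow> 'a::complete_lattice)
   \<Rightarrow> ('x \<Rightarrow> 'a) \<Rightarrow> bool" where
  "stable_support qa supp suppX \<longleftrightarrow> (\<forall>q x. suppX (qa q x) \<le> supp q)"

end

theory Submission
  imports Defs
begin

lemma supmono:
  fixes f :: "'a::complete_lattice \<Rightarrow> 'b::complete_lattice"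
  assumes "\<forall>S. f (Sup S) = Sup (f ` S)" and "x \<le> y"
  shows "f x \<le> f y"
proof -
  have "y = Sup {x, y}" using assms(2) by (simp add: sup_absorb2)
  then have "f y = Sup {f x, f y}" using assms(1) by (metis image_insert image_empty)
  then show ?thesis by (metis Sup_insert Sup_empty sup_bot_right sup_ge1)
qed

theorem lemma4p4:
  fixes la :: "'a::complete_lattice \<Rightarrow> 'q::complete_lattice \<Rightarrow> 'q"
    and ra :: "'q \<Rightarrow> 'a \<Rightarrow> 'q"
    and mult :: "'q \<Rightarrow> 'q \<Rightarrow> 'q"
    and invl :: "'q \<Rightarrow> 'q"
    and supp :: "'q \<Rightarrow> 'a"
    and ups :: "'q \<Rightarrow> 'a"
    and qa :: "'q \<Rightarrow> 'x::complete_lattice \<Rightarrow> 'x"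
    and xa :: "'a \<Rightarrow> 'x \<Rightarrow> 'x"
    and ip :: "'x \<Rightarrow> 'x \<Rightarrow> 'q"
    and suppX :: "'x \<Rightarrow> 'a"
    and x :: 'x and b :: 'a
  assumes "is_frame TYPE('a)"
    and "groupoid_quantale la ra mult invl supp ups"
    and "Q_module la ra mult qa xa"
    and "pre_hilbert la mult invl qa xa ip"
    and "module_support qa xa ip suppX"
    and "stable_support qa supp suppX"
    and "xa b top \<le> qa (ip x x) top"
    and "xa b x = x"
  shows "b = suppX x"
proof -
  have GQ: "inv_AA_quantale la ra mult invl" "quantale_support la mult invl supp"
      "equivariant_support la supp"
    using assms(2) unfolding groupoid_quantale_def by blast+
  have supS: "\<forall>S. supp (Sup S) = Sup (supp ` S)" using GQ(2) unfolding quantale_support_def by blast+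
  have eqv: "\<And>a y. supp (la a y) = inf a (supp y)" using GQ(3) unfolding equivariant_support_def by blast+
  have invS: "\<forall>S. invl (Sup S) = Sup (invl ` S)" using GQ(1) unfolding inv_AA_quantale_def by blast+
  have QM: "\<forall>S x. qa (Sup S) x = Sup ((\<lambda>q. qa q x) ` S)" "\<forall>q S. qa q (Sup S) = Sup (qa q ` S)"
     "left_loc_module xa" "\<forall>a q x. qa (la a q) x = xa a (qa q x)"
    using assms(3) unfolding Q_module_def by blast+
  have xaS: "\<And>a. \<forall>S. xa a (Sup S) = Sup (xa a ` S)" using QM(3) unfolding left_loc_module_def by blast+
  have PH: "\<And>q x y. ip (qa q x) y = mult q (ip x y)" "\<And>a x. la a (ip x top) = ip (xa a x) top"
     "\<forall>S y. ip (Sup S) y = Sup ((\<lambda>x. ip x y) ` S)" "\<And>x y. ip x y = invl (ip y x)"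
    using assms(4) unfolding pre_hilbert_def by blast+
  have MS: "mono suppX" "suppX top = top" "\<And>x. xa (suppX x) top \<le> qa (ip x x) top"
     "\<And>x. xa (suppX x) x = x"
    using assms(5) unfolding module_support_def by blast+
  have ST: "\<And>q x. suppX (qa q x) \<le> supp q" using assms(6) unfolding stable_support_def by blast+
  have qamono: "\<And>q r y. q \<le> r \<Longrightarrow> qa q y \<le> qa r y"
  proof -
    fix q r :: 'q and y :: 'x assume "q \<le> r"
    have "\<forall>S. (\<lambda>q. qa q y) (Sup S) = Sup ((\<lambda>q. qa q y) ` S)" using QM(1) by blast
    then show "qa q y \<le> qa r y" using supmono[of "\<lambda>q. qa q y"] \<open>q \<le> r\<close> by blast
  qed
  have ipmono: "\<And>y z w. y \<le> z \<Longrightarrow> ip y w \<le> ip z w"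
  proof -
    fix y z w :: 'x assume "y \<le> z"
    have "\<forall>S. (\<lambda>x. ip x w) (Sup S) = Sup ((\<lambda>x. ip x w) ` S)" using PH(3) by blast
    then show "ip y w \<le> ip z w" using supmono[of "\<lambda>x. ip x w"] \<open>y \<le> z\<close> by blast
  qed
  have iptop: "\<And>y w. ip y w \<le> ip y top"
  proof -
    fix y w :: 'x
    have "ip w y \<le> ip top y" using ipmono by simp
    then have "invl (ip w y) \<le> invl (ip top y)" using supmono[OF invS] by blast
    then show "ip y w \<le> ip y top" using PH(4) by metis
  qed
  have suppmono: "\<And>q r. q \<le> r \<Longrightarrow> supp q \<le> supp r" using supmono[OF supS] by blast
  have faith: "\<And>a c. xa a top \<le> xa c top \<Longrightarrow> a \<le> c"
  proof -
    fix a c :: 'a assume h: "xa a top \<le> xa c top"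
    define p where "p = ip top top"
    have "top = suppX (top::'x)" using MS(2) by simp
    also have "\<dots> = suppX (xa (suppX top) top)" using MS(4) by simp
    also have "\<dots> \<le> suppX (qa p top)" using MS(1) MS(3)[of top] unfolding p_def mono_def by blast+
    also have "\<dots> \<le> supp p" using ST by blast
    finally have sp: "supp p = top" using top_le by blast
    have "la a p = ip (xa a top) top" using PH(2) p_def by simp
    also have "\<dots> \<le> ip (xa c top) top" using ipmono h by blast
    also have "\<dots> = la c p" using PH(2) p_def by simp
    finally have "supp (la a p) \<le> supp (la c p)" using suppmono by blast
    then show "a \<le> c" using eqv sp by simp
  qed
  have key: "\<And>c d. xa c top \<le> qa (ip x x) top \<Longrightarrow> xa d x = x \<Longrightarrow> c \<le> d"
  proof -
    fix c d :: 'a assume h1: "xa c top \<le> qa (ip x x) top" and h2: "xa d x = x"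
    have "ip x x \<le> ip x top" using iptop by blast
    also have "\<dots> = la d (ip x top)" using PH(2)[of d x] h2 by simp
    finally have "qa (ip x x) top \<le> qa (la d (ip x top)) top" using qamono by blast
    also have "\<dots> = xa d (qa (ip x top) top)" using QM(4) by blast
    also have "\<dots> \<le> xa d top" using supmono[OF xaS] by simp
    finally show "c \<le> d" using h1 faith by (meson order_trans)
  qed
  have "b \<le> suppX x" using key assms(7) MS(4) by blast
  moreover have "suppX x \<le> b" using key MS(3) assms(8) by blast
  ultimately show ?thesis by simp
qed

end
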